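(* Let $X$ be a set of pointed Kripke models, $\Lambda$ a normal modal logic sound with respect to $X$, $D\subseteq\boldsymbol{\mathcal{L}}_{\Lambda}$ a $\Lambda$-representative descriptor for $X$, and $d_w\in\mathcal{D}_{(X,D)}$. Then every clean map $\boldsymbol{f}:X_{\boldsymbol{\mathcal{L}}_{\Lambda}}\to X_{\boldsymbol{\mathcal{L}}_{\Lambda}}$ is uniformly continuous in the metric space $(X_{\boldsymbol{\mathcal{L}}_{\Lambda}},d_w)$ (where $X_D=X_{\boldsymbol{\mathcal{L}}_{\Lambda}}$).
   Context: Signature: countable non-empty sets $\Phi$ (atoms) and $\mathcal{I}$ (indices); $\mathcal{L}$: $\varphi ::= \top\mid p\mid\neg\varphi\mid\varphi\wedge\varphi\mid\Box_i\varphi$. Kripke models $M=(\llbracket M\rrbracket,R,\llbracket\cdot\rrbracket)$ have countable non-empty state sets, relations $R_i$ ($i\in\mathcal{I}$) and atom valuation $\llbracket\cdot\rrbracket$; pointed models $Ms$; standard semantics. For a normal modal logic $\Lambda$, $\boldsymbol{\varphi}$ is the class of formulas $\Lambda$-provably equivalent to $\varphi$, and $\boldsymbol{\mathcal{L}}_{\Lambda}=\{\boldsymbol{\varphi}:\varphi\in\mathcal{L}\}$. A descriptor for $X$ is a set $D\subseteq\boldsymbol{\mathcal{L}}_{\Lambda}$; $X_D=\{\boldsymbol{x}_D:x\in X\}$ with $\boldsymbol{x}_D=\{y\in X:\forall\boldsymbol{\varphi}\in D,\ y\models\varphi\iff x\models\varphi\}$. $D$ is $\Lambda$-representative if for every $\varphi\in\mathcal{L}$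 there is $\{\boldsymbol{\psi}_i\}_{i\in I}\subseteq D$ such that for every $J\subseteq I$ the set $\{\psi_i\}_{i\in J}\cup\{\neg\psi_i\}_{i\in I\setminus J}$ $\Lambda$-entails $\varphi$ or $\neg\varphi$. With an enumeration $\boldsymbol{\varphi}_1,\boldsymbol{\varphi}_2,\dots$ of $D$, a weight function is $w:D\to\mathbb{R}_{>0}$ with $\sum_k w(\boldsymbol{\varphi}_k)<\infty$, and $d_w(\boldsymbol{x},\boldsymbol{y})=\sum_k w(\boldsymbol{\varphi}_k)d_k(\boldsymbol{x},\boldsymbol{y})$ where $d_k=0$ if $x,y$ agree on $\varphi_k$ and $1$ otherwise; $\mathcal{D}_{(X,D)}$ is the set of all such $d_w$. A multi-pointed action model is $\Sigma\Gamma=(\llbracket\Sigma\rrbracket,\mathsf{R},pre,post,\Gamma)$ with $\llbracket\Sigma\rrbracket$ a countable non-empty set of actions, $\mathsf{R}_i\subseteq\llbracket\Sigma\rrbracket^2$ for $i\in\mathcal{I}$, $pre:\llbracket\Sigma\rrbracket\to\mathcal{L}$, $post:\llbracket\Sigma\rrbracket\to\mathcal{L}$ with each $post(\sigma)$ either $\top$ or a conjunction of literals over $\Phi$, and $\emptyset\neq\Gamma\subseteq\llbracket\Sigma\rrbracket$. It is precondition finite if $\{\boldsymbol{pre(\sigma)}:\sigma\in\llbracket\Sigma\rrbracket\}$ is finite; exhaustive over $X$ if every $x\in X$ satisfies $pre(\sigma)$ for some $\sigma\in\Gamma$; deterministic over $X$ if every $x\in X$ satisfies $pre(\sigma)\wedge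 pre(\sigma')\to\bot$ for all $\sigma\neq\sigma'\in\Gamma$. For such $\Sigma\Gamma$ and $Ms\in X$, the product update $Ms\otimes\Sigma\Gamma$ has states $\{(s,\sigma):Ms\models pre(\sigma)\}$, relations $R'_i=\{((s,\sigma),(t,\tau)):(s,t)\in R_i,(\sigma,\tau)\in\mathsf{R}_i\}$, valuation $\llbracket p\rrbracket'=\{(s,\sigma):s\in\llbracket p\rrbracket, post(\sigma)\not\models\neg p\}\cup\{(s,\sigma):post(\sigma)\models p\}$, and designated state $(s,\sigma)$ for the $\sigma\in\Gamma$ with $Ms\models pre(\sigma)$. $\Sigma\Gamma$ is closing over $X$ if $x\otimes\Sigma\Gamma\in X$ for all $x\in X$. A map $\boldsymbol{f}:X_{\boldsymbol{\mathcal{L}}_{\Lambda}}\to X_{\boldsymbol{\mathcal{L}}_{\Lambda}}$ is clean if there is a precondition finite multi-pointed action model $\Sigma\Gamma$ closing, deterministic and exhaustive over $X$ with $\boldsymbol{f}(\boldsymbol{x})=\boldsymbol{y}$ iff $x\otimes\Sigma\Gamma\in\boldsymbol{y}$. *)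

theory Defs
  imports "HOL-Analysis.Analysis"
begin

datatype ('p, 'i) fm = Top | Atom 'p | Neg "('p, 'i) fm" | Conj "('p, 'i) fm" "('p, 'i) fm"
  | Box 'i "('p, 'i) fm"

definition Bot :: "('p, 'i) fm" where "Bot = Neg Top"
definition Imp :: "('p, 'i) fm \<Rightarrow> ('p, 'i) fm \<Rightarrow> ('p, 'i) fm" where
  "Imp a b = Neg (Conj a (Neg b))"
definition Iff :: "('p, 'i) fm \<Rightarrow> ('p, 'i) fm \<Rightarrow> ('p, 'i) fm" where
  "Iff a b = Conj (Imp a b) (Imp b a)"

section \<open>Kripke models (states encoded as naturals: countable state sets)\<close>

record ('p, 'i) kripke =
  st  :: "nat set"
  rel :: "'i \<Rightarrow> (nat \<times> nat) set"
  val :: "'p \<Rightarrow> nat set"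

type_synonym ('p, 'i) pmodel = "('p, 'i) kripke \<times> nat"

definition wf_kripke :: "('p, 'i) kripke \<Rightarrow> bool" where
  "wf_kripke M \<longleftrightarrow> st M \<noteq> {} \<and> (\<forall>i. rel M i \<subseteq> st M \<times> st M) \<and> (\<forall>p. val M p \<subseteq> st M)"

definition wf_pointed :: "('p, 'i) pmodel \<Rightarrow> bool" where
  "wf_pointed x \<longleftrightarrow> wf_kripke (fst x) \<and> snd x \<in> st (fst x)"

fun sat :: "('p, 'i) kripke \<Rightarrow> nat \<Rightarrow> ('p, 'i) fm \<Rightarrow> bool" where
  "sat M s Top = True"
| "sat M s (Atom p) = (s \<in> val M p)"
| "sat M s (Neg a) = (\<not> sat M s a)"
| "sat M s (Conj a b) = (sat M s a \<and> sat M s b)"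
| "sat M s (Box i a) = (\<forall>t. (s, t) \<in> rel M i \<longrightarrow> sat M t a)"

definition psat :: "('p, 'i) pmodel \<Rightarrow> ('p, 'i) fm \<Rightarrow> bool" where
  "psat x a = sat (fst x) (snd x) a"

text \<open>Propositional evaluation, treating atoms and boxed formulas as propositional variables.\<close>
fun peval :: "(('p, 'i) fm \<Rightarrow> bool) \<Rightarrow> ('p, 'i) fm \<Rightarrow> bool" where
  "peval v Top = True"
| "peval v (Atom p) = v (Atom p)"
| "peval v (Neg a) = (\<not> peval v a)"
| "peval v (Conj a b) = (peval v a \<and> peval v b)"
| "peval v (Box i a) = v (Box i a)"

definition taut :: "('p, 'i) fm \<Rightarrow> bool" where
  "taut a \<longleftrightarrow> (\<forall>v. peval v a)"

definition pentails :: "('p, 'i) fm \<Rightarrow> ('p, 'i) fm \<Rightarrow> bool" where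
  "pentails a b \<longleftrightarrow> taut (Imp a b)"

fun subst :: "('p \<Rightarrow> ('p, 'i) fm) \<Rightarrow> ('p, 'i) fm \<Rightarrow> ('p, 'i) fm" where
  "subst \<sigma> Top = Top"
| "subst \<sigma> (Atom p) = \<sigma> p"
| "subst \<sigma> (Neg a) = Neg (subst \<sigma> a)"
| "subst \<sigma> (Conj a b) = Conj (subst \<sigma> a) (subst \<sigma> b)"
| "subst \<sigma> (Box i a) = Box i (subst \<sigma> a)"

definition normal_logic :: "('p, 'i) fm set \<Rightarrow> bool" where
  "normal_logic \<Lambda> \<longleftrightarrow>
     (\<forall>a. taut a \<longrightarrow> a \<in> \<Lambda>)
   \<and> (\<forall>i a b. Imp (Box i (Imp a b)) (Imp (Box i a) (Box i b)) \<in> \<Lambda>)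
   \<and> (\<forall>a b. a \<in> \<Lambda> \<longrightarrow> Imp a b \<in> \<Lambda> \<longrightarrow> b \<in> \<Lambda>)
   \<and> (\<forall>i a. a \<in> \<Lambda> \<longrightarrow> Box i a \<in> \<Lambda>)
   \<and> (\<forall>\<sigma> a. a \<in> \<Lambda> \<longrightarrow> subst \<sigma> a \<in> \<Lambda>)"

definition sound_wrt :: "('p, 'i) fm set \<Rightarrow> ('p, 'i) pmodel set \<Rightarrow> bool" where
  "sound_wrt \<Lambda> X \<longleftrightarrow> (\<forall>a\<in>\<Lambda>. \<forall>x\<in>X. psat x a)"

definition lentails :: "('p, 'i) fm set \<Rightarrow> ('p, 'i) fm set \<Rightarrow> ('p, 'i) fm \<Rightarrow> bool" where
  "lentails \<Lambda> G a \<longleftrightarrow> (\<exists>xs. set xs \<subseteq> G \<and> Imp (foldr Conj xs Top) a \<in> \<Lambda>)"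

definition eqc :: "('p, 'i) fm set \<Rightarrow> ('p, 'i) fm \<Rightarrow> ('p, 'i) fm set" where
  "eqc \<Lambda> a = {b. Iff a b \<in> \<Lambda>}"

definition LL :: "('p, 'i) fm set \<Rightarrow> ('p, 'i) fm set set" where
  "LL \<Lambda> = range (eqc \<Lambda>)"

definition xcls :: "('p, 'i) fm set \<Rightarrow> ('p, 'i) pmodel set \<Rightarrow> ('p, 'i) fm set set
                    \<Rightarrow> ('p, 'i) pmodel \<Rightarrow> ('p, 'i) pmodel set" where
  "xcls \<Lambda> X D x = {y \<in> X. \<forall>a. eqc \<Lambda> a \<in> D \<longrightarrow> (psat y a \<longleftrightarrow> psat x a)}"

definition Xcls :: "('p, 'i) fm set \<Rightarrow> ('p, 'i) pmodel set \<Rightarrow> ('p, 'i) fm set set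
                    \<Rightarrow> ('p, 'i) pmodel set set" where
  "Xcls \<Lambda> X D = xcls \<Lambda> X D ` X"

definition representative :: "('p, 'i) fm set \<Rightarrow> ('p, 'i) fm set set \<Rightarrow> bool" where
  "representative \<Lambda> D \<longleftrightarrow>
     (\<forall>a. \<exists>\<Psi>. eqc \<Lambda> ` \<Psi> \<subseteq> D \<and>
        (\<forall>J \<subseteq> \<Psi>. lentails \<Lambda> (J \<union> Neg ` (\<Psi> - J)) a \<or> lentails \<Lambda> (J \<union> Neg ` (\<Psi> - J)) (Neg a)))"

definition weight :: "('p, 'i) fm set set \<Rightarrow> (('p, 'i) fm set \<Rightarrow> real) \<Rightarrow> bool" where
  "weight D w \<longleftrightarrow> (\<forall>C\<in>D. w C > 0) \<and> w summable_on D"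

definition dw :: "('p, 'i) fm set \<Rightarrow> ('p, 'i) fm set set \<Rightarrow> (('p, 'i) fm set \<Rightarrow> real)
                  \<Rightarrow> ('p, 'i) pmodel set \<Rightarrow> ('p, 'i) pmodel set \<Rightarrow> real" where
  "dw \<Lambda> D w A B =
     (\<Sum>\<^sub>\<infinity>C\<in>D. w C * (let a = (SOME a. eqc \<Lambda> a = C); x = (SOME x. x \<in> A); y = (SOME y. y \<in> B)
                      in if psat x a \<longleftrightarrow> psat y a then 0 else 1))"

definition unif_cont_on :: "'a set \<Rightarrow> ('a \<Rightarrow> 'a \<Rightarrow> real) \<Rightarrow> ('a \<Rightarrow> 'a) \<Rightarrow> bool" where
  "unif_cont_on S d f \<longleftrightarrow>
     (\<forall>e>0. \<exists>\<delta>>0. \<forall>a\<in>S. \<forall>b\<in>S. d a b < \<delta> \<longrightarrow> d (f a) (f b) < e)"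

section \<open>Action models and product update (actions encoded as naturals)\<close>

record ('p, 'i) amodel =
  act  :: "nat set"
  arel :: "'i \<Rightarrow> (nat \<times> nat) set"
  pre  :: "nat \<Rightarrow> ('p, 'i) fm"
  post :: "nat \<Rightarrow> ('p, 'i) fm"

fun is_literal :: "('p, 'i) fm \<Rightarrow> bool" where
  "is_literal (Atom p) = True"
| "is_literal (Neg (Atom p)) = True"
| "is_literal _ = False"

fun is_lit_conj :: "('p, 'i) fm \<Rightarrow> bool" where
  "is_lit_conj (Conj a b) = (is_lit_conj a \<and> is_lit_conj b)"
| "is_lit_conj a = is_literal a"

definition wf_action :: "('p, 'i) amodel \<Rightarrow> nat set \<Rightarrow> bool" where
  "wf_action A G \<longleftrightarrow> act A \<noteq> {} \<and> (\<forall>i. arel A i \<subseteq> act A \<times> act A)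
     \<and> (\<forall>\<sigma>\<in>act A. post A \<sigma> = Top \<or> is_lit_conj (post A \<sigma>))
     \<and> G \<noteq> {} \<and> G \<subseteq> act A"

definition precondition_finite :: "('p, 'i) fm set \<Rightarrow> ('p, 'i) amodel \<Rightarrow> bool" where
  "precondition_finite \<Lambda> A \<longleftrightarrow> finite ((\<lambda>\<sigma>. eqc \<Lambda> (pre A \<sigma>)) ` act A)"

definition exhaustive :: "('p, 'i) pmodel set \<Rightarrow> ('p, 'i) amodel \<Rightarrow> nat set \<Rightarrow> bool" where
  "exhaustive X A G \<longleftrightarrow> (\<forall>x\<in>X. \<exists>\<sigma>\<in>G. psat x (pre A \<sigma>))"

definition deterministic :: "('p, 'i) pmodel set \<Rightarrow> ('p, 'i) amodel \<Rightarrow> nat set \<Rightarrow> bool" where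
  "deterministic X A G \<longleftrightarrow>
     (\<forall>x\<in>X. \<forall>\<sigma>\<in>G. \<forall>\<sigma>'\<in>G. \<sigma> \<noteq> \<sigma>' \<longrightarrow> psat x (Imp (Conj (pre A \<sigma>) (pre A \<sigma>')) Bot))"

definition upd_model :: "('p, 'i) kripke \<Rightarrow> ('p, 'i) amodel \<Rightarrow> ('p, 'i) kripke" where
  "upd_model M A =
     (let S = {(s, \<sigma>). s \<in> st M \<and> \<sigma> \<in> act A \<and> sat M s (pre A \<sigma>)} in
      \<lparr> st = prod_encode ` S,
        rel = (\<lambda>i. {(prod_encode (s, \<sigma>), prod_encode (t, \<tau>)) | s \<sigma> t \<tau>.
                    (s, \<sigma>) \<in> S \<and> (t, \<tau>) \<in> S \<and> (s, t) \<in> rel M i \<and> (\<sigma>, \<tau>) \<in> arel A i}),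
        val = (\<lambda>p. prod_encode ` {(s, \<sigma>) \<in> S.
                    (s \<in> val M p \<and> \<not> pentails (post A \<sigma>) (Neg (Atom p)))
                    \<or> pentails (post A \<sigma>) (Atom p)}) \<rparr>)"

definition update :: "('p, 'i) pmodel \<Rightarrow> ('p, 'i) amodel \<Rightarrow> nat set \<Rightarrow> ('p, 'i) pmodel" where
  "update x A G =
     (upd_model (fst x) A, prod_encode (snd x, SOME \<sigma>. \<sigma> \<in> G \<and> psat x (pre A \<sigma>)))"

definition closing :: "('p, 'i) pmodel set \<Rightarrow> ('p, 'i) amodel \<Rightarrow> nat set \<Rightarrow> bool" where
  "closing X A G \<longleftrightarrow> (\<forall>x\<in>X. update x A G \<in> X)"

definition clean :: "('p, 'i) fm set \<Rightarrow> ('p, 'i) pmodel set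
                     \<Rightarrow> (('p, 'i) pmodel set \<Rightarrow> ('p, 'i) pmodel set) \<Rightarrow> bool" where
  "clean \<Lambda> X f \<longleftrightarrow>
     (\<forall>a\<in>Xcls \<Lambda> X (LL \<Lambda>). f a \<in> Xcls \<Lambda> X (LL \<Lambda>)) \<and>
     (\<exists>A G. wf_action A G \<and> precondition_finite \<Lambda> A \<and> closing X A G
        \<and> deterministic X A G \<and> exhaustive X A G
        \<and> (\<forall>x\<in>X. \<forall>b\<in>Xcls \<Lambda> X (LL \<Lambda>).
              f (xcls \<Lambda> X (LL \<Lambda>) x) = b \<longleftrightarrow> update x A G \<in> b))"

end

theory Submission
  imports Defs
begin


definition rep :: "('p, 'i) fm set \<Rightarrow> ('p, 'i) fm set \<Rightarrow> ('p, 'i) fm" where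
  "rep \<Lambda> C = (SOME a. eqc \<Lambda> a = C)"

lemma sat_foldr: "sat M t (foldr Conj xs Top) \<longleftrightarrow> (\<forall>e\<in>set xs. sat M t e)"
  by (induct xs) auto

lemma sat_Iff: "sat M t (Iff a b) \<longleftrightarrow> (sat M t a \<longleftrightarrow> sat M t b)"
  by (auto simp: Iff_def Imp_def)

lemma nl_taut: "normal_logic \<Lambda> \<Longrightarrow> taut a \<Longrightarrow> a \<in> \<Lambda>"
  unfolding normal_logic_def by (drule conjunct1) blast

lemma nl_box: "normal_logic \<Lambda> \<Longrightarrow> a \<in> \<Lambda> \<Longrightarrow> Box i a \<in> \<Lambda>"
  unfolding normal_logic_def by (drule conjunct2, drule conjunct2, drule conjunct2, drule conjunct1) blast

lemma eqc_self: "normal_logic \<Lambda> \<Longrightarrow> a \<in> eqc \<Lambda> a"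
proof -
  assume nl: "normal_logic \<Lambda>"
  have "taut (Iff a a)" by (simp add: taut_def Iff_def Imp_def)
  then show ?thesis using nl_taut[OF nl] by (simp add: eqc_def)
qed

lemma rep_equiv: "normal_logic \<Lambda> \<Longrightarrow> Iff (rep \<Lambda> (eqc \<Lambda> a)) a \<in> \<Lambda>"
proof -
  assume nl: "normal_logic \<Lambda>"
  have "eqc \<Lambda> (rep \<Lambda> (eqc \<Lambda> a)) = eqc \<Lambda> a" unfolding rep_def by (rule someI) (rule refl)
  with eqc_self[OF nl, of a] show ?thesis by (auto simp: eqc_def)
qed

definition reach :: "('p, 'i) pmodel set \<Rightarrow> ('p, 'i) pmodel set" where
  "reach X = {(fst x, t) | x t. x \<in> X \<and> (snd x, t) \<in> (\<Union>i. rel (fst x) i)\<^sup>*}"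

lemma reach_base: "x \<in> X \<Longrightarrow> (fst x, snd x) \<in> reach X"
  unfolding reach_def by blast

lemma reach_succ: "(M, t) \<in> reach X \<Longrightarrow> (t, u) \<in> rel M i \<Longrightarrow> (M, u) \<in> reach X"
  unfolding reach_def by (auto intro: rtrancl_into_rtrancl)

lemma reach_wf: "\<forall>x\<in>X. wf_pointed x \<Longrightarrow> (M, t) \<in> reach X \<Longrightarrow> wf_kripke M \<and> t \<in> st M"
proof -
  assume wf: "\<forall>x\<in>X. wf_pointed x" and r: "(M, t) \<in> reach X"
  then obtain x where x: "x \<in> X" "M = fst x" "(snd x, t) \<in> (\<Union>i. rel (fst x) i)\<^sup>*"
    unfolding reach_def by blast
  have wk: "wf_kripke M" "snd x \<in> st M" using wf x by (auto simp: wf_pointed_def)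
  from x(3) have "t \<in> st M"
  proof (induct rule: rtrancl_induct)
    case base then show ?case using wk by simp
  next
    case (step y z) then show ?case using wk(1) x(2) by (auto simp: wf_kripke_def)
  qed
  with wk show ?thesis by simp
qed

lemma reach_sound:
  assumes nl: "normal_logic \<Lambda>" and so: "sound_wrt \<Lambda> X" and r: "(M, t) \<in> reach X"
  shows "\<forall>a\<in>\<Lambda>. sat M t a"
proof -
  from r obtain x where x: "x \<in> X" "M = fst x" "(snd x, t) \<in> (\<Union>i. rel (fst x) i)\<^sup>*"
    unfolding reach_def by blast
  from x(3) show ?thesis
  proof (induct rule: rtrancl_induct)
    case base then show ?case using so x by (auto simp: sound_wrt_def psat_def)
  next
    case (step y z)
    from step(2) obtain i where i: "(y, z) \<in> rel (fst x) i" by blast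
    show ?case
    proof
      fix a assume "a \<in> \<Lambda>"
      then have "Box i a \<in> \<Lambda>" using nl_box[OF nl] by blast
      then have "sat M y (Box i a)" using step(3) by blast
      then show "sat M z a" using i x(2) by simp
    qed
  qed
qed

lemma reach_equiv:
  assumes "normal_logic \<Lambda>" "sound_wrt \<Lambda> X" "(M, t) \<in> reach X"
  shows "sat M t (rep \<Lambda> (eqc \<Lambda> a)) \<longleftrightarrow> sat M t a"
proof -
  have "sat M t (Iff (rep \<Lambda> (eqc \<Lambda> a)) a)"
    using reach_sound[OF assms] rep_equiv[OF assms(1), of a] by blast
  then show ?thesis by (simp only: sat_Iff)
qed

lemma upd_val: "prod_encode (t,\<tau>) \<in> val (upd_model M A) p \<longleftrightarrow>
   t \<in> st M \<and> \<tau> \<in> act A \<and> sat M t (pre A \<tau>) \<and>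
   ((t \<in> val M p \<and> \<not> pentails (post A \<tau>) (Neg (Atom p))) \<or> pentails (post A \<tau>) (Atom p))"
  unfolding upd_model_def Let_def by (simp add: inj_image_mem_iff[OF inj_prod_encode[of UNIV]])

lemma upd_rel: "(prod_encode (t,\<tau>), v) \<in> rel (upd_model M A) i \<longleftrightarrow>
   (\<exists>u \<tau>'. v = prod_encode (u,\<tau>') \<and> t \<in> st M \<and> \<tau> \<in> act A \<and> sat M t (pre A \<tau>)
     \<and> u \<in> st M \<and> \<tau>' \<in> act A \<and> sat M u (pre A \<tau>') \<and> (t, u) \<in> rel M i \<and> (\<tau>, \<tau>') \<in> arel A i)"
  unfolding upd_model_def Let_def by simp



definition good where
  "good X A a \<tau> \<phi> \<longleftrightarrow> (\<forall>M t. (M, t) \<in> reach X \<longrightarrow> sat M t (pre A \<tau>) \<longrightarrow>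
      (sat (upd_model M A) (prod_encode (t, \<tau>)) a \<longleftrightarrow> sat M t \<phi>))"

lemma good_Top: "good X A Top \<tau> Top" by (simp add: good_def)

lemma good_Neg: "good X A a \<tau> \<phi> \<Longrightarrow> good X A (Neg a) \<tau> (Neg \<phi>)"
  unfolding good_def by simp

lemma good_Conj: "good X A a \<tau> \<phi> \<Longrightarrow> good X A b \<tau> \<psi> \<Longrightarrow> good X A (Conj a b) \<tau> (Conj \<phi> \<psi>)"
  unfolding good_def by simp

lemma red_Top: "\<exists>\<Phi>. finite \<Phi> \<and> (\<forall>\<tau>\<in>act A. \<exists>\<phi>\<in>\<Phi>. good X A Top \<tau> \<phi>)"
  by (rule exI[of _ "{Top}"]) (simp add: good_Top)

lemma red_Neg:
  assumes "\<exists>\<Phi>. finite \<Phi> \<and> (\<forall>\<tau>\<in>act A. \<exists>\<phi>\<in>\<Phi>. good X A a \<tau> \<phi>)"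
  shows "\<exists>\<Phi>. finite \<Phi> \<and> (\<forall>\<tau>\<in>act A. \<exists>\<phi>\<in>\<Phi>. good X A (Neg a) \<tau> \<phi>)"
proof -
  from assms obtain \<Phi> where "finite \<Phi>" "\<forall>\<tau>\<in>act A. \<exists>\<phi>\<in>\<Phi>. good X A a \<tau> \<phi>" by blast
  then have "finite (Neg ` \<Phi>)" "\<forall>\<tau>\<in>act A. \<exists>\<phi>\<in>Neg ` \<Phi>. good X A (Neg a) \<tau> \<phi>"
    using good_Neg by simp_all blast
  then show ?thesis by blast
qed

lemma red_Conj:
  assumes "\<exists>\<Phi>. finite \<Phi> \<and> (\<forall>\<tau>\<in>act A. \<exists>\<phi>\<in>\<Phi>. good X A a \<tau> \<phi>)"
    and "\<exists>\<Phi>. finite \<Phi> \<and> (\<forall>\<tau>\<in>act A. \<exists>\<phi>\<in>\<Phi>. good X A b \<tau> \<phi>)"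
  shows "\<exists>\<Phi>. finite \<Phi> \<and> (\<forall>\<tau>\<in>act A. \<exists>\<phi>\<in>\<Phi>. good X A (Conj a b) \<tau> \<phi>)"
proof -
  from assms obtain \<Phi> \<Psi> where "finite \<Phi>" "\<forall>\<tau>\<in>act A. \<exists>\<phi>\<in>\<Phi>. good X A a \<tau> \<phi>"
     "finite \<Psi>" "\<forall>\<tau>\<in>act A. \<exists>\<phi>\<in>\<Psi>. good X A b \<tau> \<phi>" by blast
  then have "finite ((\<lambda>(\<phi>, \<psi>). Conj \<phi> \<psi>) ` (\<Phi> \<times> \<Psi>))"
    "\<forall>\<tau>\<in>act A. \<exists>\<phi>\<in>(\<lambda>(\<phi>, \<psi>). Conj \<phi> \<psi>) ` (\<Phi> \<times> \<Psi>). good X A (Conj a b) \<tau> \<phi>"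
  proof -
    show "finite ((\<lambda>(\<phi>, \<psi>). Conj \<phi> \<psi>) ` (\<Phi> \<times> \<Psi>))" using \<open>finite \<Phi>\<close> \<open>finite \<Psi>\<close> by simp
    show "\<forall>\<tau>\<in>act A. \<exists>\<phi>\<in>(\<lambda>(\<phi>, \<psi>). Conj \<phi> \<psi>) ` (\<Phi> \<times> \<Psi>). good X A (Conj a b) \<tau> \<phi>"
    proof
      fix \<tau> assume "\<tau> \<in> act A"
      then obtain \<phi> \<psi> where "\<phi> \<in> \<Phi>" "good X A a \<tau> \<phi>" "\<psi> \<in> \<Psi>" "good X A b \<tau> \<psi>"
        using \<open>\<forall>\<tau>\<in>act A. \<exists>\<phi>\<in>\<Phi>. good X A a \<tau> \<phi>\<close> \<open>\<forall>\<tau>\<in>act A. \<exists>\<phi>\<in>\<Psi>. good X A b \<tau> \<phi>\<close> by blast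
      then show "\<exists>\<phi>\<in>(\<lambda>(\<phi>, \<psi>). Conj \<phi> \<psi>) ` (\<Phi> \<times> \<Psi>). good X A (Conj a b) \<tau> \<phi>"
        using good_Conj by (intro bexI[of _ "Conj \<phi> \<psi>"]) (auto intro: image_eqI[of _ _ "(\<phi>, \<psi>)"])
    qed
  qed
  then show ?thesis by blast
qed

lemma red_Atom:
  assumes wfX: "\<forall>x\<in>X. wf_pointed x"
  shows "\<exists>\<Phi>. finite \<Phi> \<and> (\<forall>\<tau>\<in>act A. \<exists>\<phi>\<in>\<Phi>. good X A (Atom p) \<tau> \<phi>)"
proof (rule exI[of _ "{Top, Bot, Atom p}"], intro conjI ballI)
  fix \<tau> assume \<tau>: "\<tau> \<in> act A"
  let ?\<phi> = "if pentails (post A \<tau>) (Atom p) then Top else if pentails (post A \<tau>) (Neg (Atom p)) then Bot else Atom p"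
  have "good X A (Atom p) \<tau> ?\<phi>"
    unfolding good_def
  proof (intro allI impI)
    fix M t assume r: "(M, t) \<in> reach X" and pt: "sat M t (pre A \<tau>)"
    have wk: "t \<in> st M" using reach_wf[OF wfX r] by blast
    show "sat (upd_model M A) (prod_encode (t, \<tau>)) (Atom p) \<longleftrightarrow> sat M t ?\<phi>"
      by (simp add: upd_val Bot_def wk \<tau> pt)
  qed
  moreover have "?\<phi> \<in> {Top, Bot, Atom p}" by simp
  ultimately show "\<exists>\<phi>\<in>{Top, Bot, Atom p}. good X A (Atom p) \<tau> \<phi>" by blast
qed simp

lemma red_Box:
  assumes wfX: "\<forall>x\<in>X. wf_pointed x" and nl: "normal_logic \<Lambda>" and so: "sound_wrt \<Lambda> X"
    and wfa: "wf_action A G" and pf: "precondition_finite \<Lambda> A"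
    and IH: "\<exists>\<Phi>. finite \<Phi> \<and> (\<forall>\<tau>\<in>act A. \<exists>\<phi>\<in>\<Phi>. \<forall>M t. (M, t) \<in> reach X \<longrightarrow> sat M t (pre A \<tau>) \<longrightarrow>
      (sat (upd_model M A) (prod_encode (t, \<tau>)) a \<longleftrightarrow> sat M t \<phi>))"
  shows "\<exists>\<Phi>. finite \<Phi> \<and> (\<forall>\<tau>\<in>act A. \<exists>\<phi>\<in>\<Phi>. \<forall>M t. (M, t) \<in> reach X \<longrightarrow> sat M t (pre A \<tau>) \<longrightarrow>
      (sat (upd_model M A) (prod_encode (t, \<tau>)) (Box i a) \<longleftrightarrow> sat M t \<phi>))"
proof -
  from IH obtain \<Phi> where fin: "finite \<Phi>" and H: "\<forall>\<tau>\<in>act A. \<exists>\<phi>\<in>\<Phi>. \<forall>M t. (M, t) \<in> reach X \<longrightarrow> sat M t (pre A \<tau>) \<longrightarrow>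
      (sat (upd_model M A) (prod_encode (t, \<tau>)) a \<longleftrightarrow> sat M t \<phi>)" by blast
  then obtain g where g: "\<forall>\<tau>\<in>act A. g \<tau> \<in> \<Phi> \<and> (\<forall>M t. (M, t) \<in> reach X \<longrightarrow> sat M t (pre A \<tau>) \<longrightarrow>
      (sat (upd_model M A) (prod_encode (t, \<tau>)) a \<longleftrightarrow> sat M t (g \<tau>)))"
    using bchoice[OF H[unfolded Bex_def]] by blast
  define Pc where "Pc = (\<lambda>\<sigma>. eqc \<Lambda> (pre A \<sigma>)) ` act A"
  define bc where "bc = (\<lambda>K. foldr Conj (map (\<lambda>(c, \<phi>). Box i (Imp (rep \<Lambda> c) \<phi>)) (SOME xs. set xs = K)) Top)"
  define K where "K = (\<lambda>\<tau>. {(eqc \<Lambda> (pre A \<tau>'), g \<tau>') | \<tau>'. \<tau>' \<in> act A \<and> (\<tau>, \<tau>') \<in> arel A i})"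
  have finPc: "finite Pc" using pf by (simp add: Pc_def precondition_finite_def)
  have g\<Phi>: "\<tau> \<in> act A \<Longrightarrow> g \<tau> \<in> \<Phi>" for \<tau> using g by blast
  have Ksub: "K \<tau> \<subseteq> Pc \<times> \<Phi>" for \<tau> unfolding K_def Pc_def using g\<Phi> by blast
  have arel_act: "(\<tau>, \<tau>') \<in> arel A i \<Longrightarrow> \<tau>' \<in> act A" for \<tau> \<tau>' using wfa by (auto simp: wf_action_def)
  show ?thesis
  proof (rule exI[of _ "bc ` Pow (Pc \<times> \<Phi>)"], intro conjI ballI)
    show "finite (bc ` Pow (Pc \<times> \<Phi>))" using finPc fin by simp
  next
    fix \<tau> assume \<tau>: "\<tau> \<in> act A"
    have finK: "finite (K \<tau>)" using Ksub finPc fin by (meson finite_SigmaI finite_subset)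
    have setK: "set (SOME xs. set xs = K \<tau>) = K \<tau>" by (rule someI_ex) (use finK finite_list in blast)
    show "\<exists>\<phi>\<in>bc ` Pow (Pc \<times> \<Phi>). \<forall>M t. (M, t) \<in> reach X \<longrightarrow> sat M t (pre A \<tau>) \<longrightarrow>
      (sat (upd_model M A) (prod_encode (t, \<tau>)) (Box i a) \<longleftrightarrow> sat M t \<phi>)"
    proof (rule bexI[of _ "bc (K \<tau>)"], intro allI impI)
      fix M t assume r: "(M, t) \<in> reach X" and pt: "sat M t (pre A \<tau>)"
      have "sat M t (bc (K \<tau>)) \<longleftrightarrow> (\<forall>(c, \<phi>)\<in>K \<tau>. sat M t (Box i (Imp (rep \<Lambda> c) \<phi>)))"
        unfolding bc_def sat_foldr set_map setK by auto
      also have "\<dots> \<longleftrightarrow> (\<forall>\<tau>'. \<tau>' \<in> act A \<and> (\<tau>, \<tau>') \<in> arel A i \<longrightarrow>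
          (\<forall>u. (t, u) \<in> rel M i \<longrightarrow> sat M u (rep \<Lambda> (eqc \<Lambda> (pre A \<tau>'))) \<longrightarrow> sat M u (g \<tau>')))"
      proof -
        have gen: "(\<forall>(c, \<phi>)\<in>K \<tau>. Q c \<phi>) \<longleftrightarrow> (\<forall>\<tau>'. \<tau>' \<in> act A \<and> (\<tau>, \<tau>') \<in> arel A i \<longrightarrow> Q (eqc \<Lambda> (pre A \<tau>')) (g \<tau>'))"
          for Q unfolding K_def by blast
        show ?thesis unfolding gen by (simp add: Imp_def)
      qed
      also have "\<dots> \<longleftrightarrow> (\<forall>\<tau>'. \<tau>' \<in> act A \<and> (\<tau>, \<tau>') \<in> arel A i \<longrightarrow>
          (\<forall>u. (t, u) \<in> rel M i \<longrightarrow> sat M u (pre A \<tau>') \<longrightarrow> sat (upd_model M A) (prod_encode (u, \<tau>')) a))"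
      proof -
        have "(sat M u (rep \<Lambda> (eqc \<Lambda> (pre A \<tau>'))) \<longrightarrow> sat M u (g \<tau>')) \<longleftrightarrow>
              (sat M u (pre A \<tau>') \<longrightarrow> sat (upd_model M A) (prod_encode (u, \<tau>')) a)"
          if "\<tau>' \<in> act A" "(t, u) \<in> rel M i" for \<tau>' u
        proof -
          have ru: "(M, u) \<in> reach X" using reach_succ[OF r that(2)] .
          show ?thesis using reach_equiv[OF nl so ru, of "pre A \<tau>'"] g that(1) ru by blast
        qed
        then show ?thesis by blast
      qed
      also have "\<dots> \<longleftrightarrow> sat (upd_model M A) (prod_encode (t, \<tau>)) (Box i a)"
      proof -
        have wk: "wf_kripke M" "t \<in> st M" using reach_wf[OF wfX r] by auto
        have "(t, u) \<in> rel M i \<Longrightarrow> u \<in> st M" for u using wk by (auto simp: wf_kripke_def)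
        note st_u = this
        show ?thesis
        proof
          assume L: "\<forall>\<tau>'. \<tau>' \<in> act A \<and> (\<tau>, \<tau>') \<in> arel A i \<longrightarrow>
            (\<forall>u. (t, u) \<in> rel M i \<longrightarrow> sat M u (pre A \<tau>') \<longrightarrow> sat (upd_model M A) (prod_encode (u, \<tau>')) a)"
          show "sat (upd_model M A) (prod_encode (t, \<tau>)) (Box i a)"
            unfolding sat.simps
          proof (intro allI impI)
            fix v assume "(prod_encode (t, \<tau>), v) \<in> rel (upd_model M A) i"
            then obtain u \<tau>' where "v = prod_encode (u, \<tau>')" "\<tau>' \<in> act A" "sat M u (pre A \<tau>')"
               "(t, u) \<in> rel M i" "(\<tau>, \<tau>') \<in> arel A i" unfolding upd_rel by blast
            then show "sat (upd_model M A) v a" using L by blast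
          qed
        next
          assume R: "sat (upd_model M A) (prod_encode (t, \<tau>)) (Box i a)"
          show "\<forall>\<tau>'. \<tau>' \<in> act A \<and> (\<tau>, \<tau>') \<in> arel A i \<longrightarrow>
            (\<forall>u. (t, u) \<in> rel M i \<longrightarrow> sat M u (pre A \<tau>') \<longrightarrow> sat (upd_model M A) (prod_encode (u, \<tau>')) a)"
          proof (intro allI impI, elim conjE)
            fix \<tau>' u assume h: "\<tau>' \<in> act A" "(\<tau>, \<tau>') \<in> arel A i" "(t, u) \<in> rel M i" "sat M u (pre A \<tau>')"
            have "(prod_encode (t, \<tau>), prod_encode (u, \<tau>')) \<in> rel (upd_model M A) i"
              unfolding upd_rel using h wk \<tau> pt st_u[OF h(3)] by blast
            then show "sat (upd_model M A) (prod_encode (u, \<tau>')) a" using R by simp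
          qed
        qed
      qed
      finally show "sat (upd_model M A) (prod_encode (t, \<tau>)) (Box i a) \<longleftrightarrow> sat M t (bc (K \<tau>))" by simp
    qed (use Ksub in blast)
  qed
qed

lemma reduction:
  assumes wfX: "\<forall>x\<in>X. wf_pointed x" and nl: "normal_logic \<Lambda>" and so: "sound_wrt \<Lambda> X"
    and wfa: "wf_action A G" and pf: "precondition_finite \<Lambda> A"
  shows "\<exists>\<Phi>. finite \<Phi> \<and> (\<forall>\<tau>\<in>act A. \<exists>\<phi>\<in>\<Phi>. \<forall>M t. (M, t) \<in> reach X \<longrightarrow> sat M t (pre A \<tau>) \<longrightarrow>
      (sat (upd_model M A) (prod_encode (t, \<tau>)) a \<longleftrightarrow> sat M t \<phi>))"
proof (induction a)
  case Top show ?case by (rule red_Top[unfolded good_def])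
next
  case (Atom p) show ?case by (rule red_Atom[OF wfX, unfolded good_def])
next
  case (Neg a) show ?case using Neg.IH by (rule red_Neg[unfolded good_def])
next
  case (Conj a b) show ?case using Conj.IH by (rule red_Conj[unfolded good_def])
next
  case (Box i a) show ?case using Box.IH by (rule red_Box[OF wfX nl so wfa pf])
qed



lemma psat_Imp: "psat z (Imp a b) \<longleftrightarrow> (psat z a \<longrightarrow> psat z b)"
  by (simp add: psat_def Imp_def)

lemma psat_rep:
  assumes "normal_logic \<Lambda>" "sound_wrt \<Lambda> X" "x \<in> X"
  shows "psat x (rep \<Lambda> (eqc \<Lambda> a)) \<longleftrightarrow> psat x a"
  using reach_equiv[OF assms(1,2) reach_base[OF assms(3)]] by (simp add: psat_def)

lemma fin_det:
  assumes wfX: "\<forall>x\<in>X. wf_pointed x" and nl: "normal_logic \<Lambda>" and so: "sound_wrt \<Lambda> X"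
    and wfa: "wf_action A G" and pf: "precondition_finite \<Lambda> A"
    and det: "deterministic X A G" and exh: "exhaustive X A G"
  shows "\<exists>\<Phi>. finite \<Phi> \<and> (\<forall>x\<in>X. \<forall>y\<in>X. (\<forall>\<phi>\<in>\<Phi>. psat x \<phi> = psat y \<phi>) \<longrightarrow>
            psat (update x A G) a = psat (update y A G) a)"
proof -
  obtain \<Phi> where fin: "finite \<Phi>" and H: "\<forall>\<tau>\<in>act A. \<exists>\<phi>\<in>\<Phi>. \<forall>M t. (M, t) \<in> reach X \<longrightarrow> sat M t (pre A \<tau>) \<longrightarrow>
      (sat (upd_model M A) (prod_encode (t, \<tau>)) a \<longleftrightarrow> sat M t \<phi>)"
    using reduction[OF wfX nl so wfa pf] by blast
  then obtain g where g: "\<forall>\<tau>\<in>act A. g \<tau> \<in> \<Phi> \<and> (\<forall>M t. (M, t) \<in> reach X \<longrightarrow> sat M t (pre A \<tau>) \<longrightarrow>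
      (sat (upd_model M A) (prod_encode (t, \<tau>)) a \<longleftrightarrow> sat M t (g \<tau>)))"
    using bchoice[OF H[unfolded Bex_def]] by blast
  define Pc where "Pc = (\<lambda>\<sigma>. eqc \<Lambda> (pre A \<sigma>)) ` act A"
  have finPc: "finite Pc" using pf by (simp add: Pc_def precondition_finite_def)
  have Gact: "G \<subseteq> act A" using wfa by (simp add: wf_action_def)
  define sg where "sg = (\<lambda>x. SOME \<sigma>. \<sigma> \<in> G \<and> psat x (pre A \<sigma>))"
  have sg: "sg x \<in> G \<and> psat x (pre A (sg x))" if "x \<in> X" for x
    unfolding sg_def by (rule someI_ex) (use exh that in \<open>auto simp: exhaustive_def\<close>)
  have uniq: "\<sigma> = \<sigma>'" if "x \<in> X" "\<sigma> \<in> G" "\<sigma>' \<in> G" "psat x (pre A \<sigma>)" "psat x (pre A \<sigma>')" for x \<sigma> \<sigma>'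
    using det that unfolding deterministic_def by (auto simp: psat_def Imp_def Bot_def)
  have upd: "psat (update x A G) a \<longleftrightarrow> psat x (g (sg x))" if "x \<in> X" for x
  proof -
    have "sg x \<in> act A" using sg[OF that] Gact by blast
    have e: "update x A G = (upd_model (fst x) A, prod_encode (snd x, sg x))"
      by (simp add: update_def sg_def)
    have "sat (upd_model (fst x) A) (prod_encode (snd x, sg x)) a \<longleftrightarrow> sat (fst x) (snd x) (g (sg x))"
      using g \<open>sg x \<in> act A\<close> reach_base[OF that] sg[OF that] by (simp add: psat_def)
    then show ?thesis by (simp add: e psat_def)
  qed
  show ?thesis
  proof (rule exI[of _ "rep \<Lambda> ` Pc \<union> \<Phi>"], intro conjI ballI impI)
    show "finite (rep \<Lambda> ` Pc \<union> \<Phi>)" using fin finPc by simp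
  next
    fix x y assume x: "x \<in> X" and y: "y \<in> X" and ag: "\<forall>\<phi>\<in>rep \<Lambda> ` Pc \<union> \<Phi>. psat x \<phi> = psat y \<phi>"
    have sx: "sg x \<in> act A" using sg[OF x] Gact by blast
    have "psat y (rep \<Lambda> (eqc \<Lambda> (pre A (sg x)))) = psat x (rep \<Lambda> (eqc \<Lambda> (pre A (sg x))))"
      using ag sx by (auto simp: Pc_def)
    then have "psat y (pre A (sg x))" using psat_rep[OF nl so x] psat_rep[OF nl so y] sg[OF x] by simp
    then have sy: "sg y = sg x" using uniq[OF y] sg[OF x] sg[OF y] by blast
    have "g (sg x) \<in> \<Phi>" using g sx by blast
    then have "psat x (g (sg x)) = psat y (g (sg x))" using ag by blast
    then show "psat (update x A G) a = psat (update y A G) a"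
      using upd[OF x] upd[OF y] sy by simp
  qed
qed



lemma compact_det:
  assumes nl: "normal_logic \<Lambda>" and so: "sound_wrt \<Lambda> X" and rp: "representative \<Lambda> D"
  shows "\<exists>\<Psi>0. finite \<Psi>0 \<and> eqc \<Lambda> ` \<Psi>0 \<subseteq> D \<and>
     (\<forall>x\<in>X. \<forall>y\<in>X. (\<forall>\<psi>\<in>\<Psi>0. psat x \<psi> = psat y \<psi>) \<longrightarrow> psat x \<phi> = psat y \<phi>)"
proof -
  obtain \<Psi> where \<Psi>D: "eqc \<Lambda> ` \<Psi> \<subseteq> D" and H: "\<forall>J \<subseteq> \<Psi>. lentails \<Lambda> (J \<union> Neg ` (\<Psi> - J)) \<phi> \<or> lentails \<Lambda> (J \<union> Neg ` (\<Psi> - J)) (Neg \<phi>)"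
    using rp unfolding representative_def by blast
  define T where "T = product_topology (\<lambda>_. discrete_topology (UNIV::bool set)) \<Psi>"
  have topT: "topspace T = PiE \<Psi> (\<lambda>_. UNIV)" by (simp add: T_def)
  have cpt: "compact_space T" unfolding T_def
    by (simp add: compact_space_product_topology compact_space_discrete_topology)
  define J where "J = (\<lambda>g::('a, 'b) fm \<Rightarrow> bool. {\<psi>\<in>\<Psi>. g \<psi>})"
  have ex: "\<forall>g. \<exists>xs. set xs \<subseteq> J g \<union> Neg ` (\<Psi> - J g) \<and>
          (Imp (foldr Conj xs Top) \<phi> \<in> \<Lambda> \<or> Imp (foldr Conj xs Top) (Neg \<phi>) \<in> \<Lambda>)"
  proof
    fix g
    have "J g \<subseteq> \<Psi>" by (auto simp: J_def)
    then have "lentails \<Lambda> (J g \<union> Neg ` (\<Psi> - J g)) \<phi> \<or> lentails \<Lambda> (J g \<union> Neg ` (\<Psi> - J g)) (Neg \<phi>)"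
      using H by blast
    then show "\<exists>xs. set xs \<subseteq> J g \<union> Neg ` (\<Psi> - J g) \<and>
          (Imp (foldr Conj xs Top) \<phi> \<in> \<Lambda> \<or> Imp (foldr Conj xs Top) (Neg \<phi>) \<in> \<Lambda>)"
      unfolding lentails_def by blast
  qed
  obtain xsf where xsf: "\<And>g. set (xsf g) \<subseteq> J g \<union> Neg ` (\<Psi> - J g) \<and>
          (Imp (foldr Conj (xsf g) Top) \<phi> \<in> \<Lambda> \<or> Imp (foldr Conj (xsf g) Top) (Neg \<phi>) \<in> \<Lambda>)"
    using choice[OF ex] by blast
  define S where "S = (\<lambda>g. {\<psi>\<in>\<Psi>. \<psi> \<in> set (xsf g) \<or> Neg \<psi> \<in> set (xsf g)})"
  have finS: "finite (S g)" for g
  proof -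
    have "S g \<subseteq> set (xsf g) \<union> Neg -` set (xsf g)" by (auto simp: S_def)
    moreover have "finite (Neg -` set (xsf g))" by (rule finite_vimageI) (auto simp: inj_def)
    ultimately show ?thesis by (meson finite_Un finite_set finite_subset)
  qed
  have SP: "S g \<subseteq> \<Psi>" for g by (auto simp: S_def)
  define U where "U = (\<lambda>g. PiE \<Psi> (\<lambda>\<psi>. if \<psi> \<in> S g then {g \<psi>} else UNIV))"
  have openU: "openin T (U g)" for g
  proof -
    have "{i \<in> \<Psi>. (if i \<in> S g then {g i} else UNIV) \<noteq> topspace (discrete_topology (UNIV::bool set))} \<subseteq> S g"
      by auto
    then have "finite {i \<in> \<Psi>. (if i \<in> S g then {g i} else UNIV) \<noteq> topspace (discrete_topology (UNIV::bool set))}"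
      using finS[of g] finite_subset by blast
    then show ?thesis unfolding T_def U_def openin_PiE_gen by simp
  qed
  have gU: "g \<in> U g" if "g \<in> topspace T" for g using that by (auto simp: topT U_def PiE_iff)
  have cover: "topspace T \<subseteq> \<Union> (U ` topspace T)" using gU by blast
  have "(\<forall>V\<in>U ` topspace T. openin T V) \<and> topspace T \<subseteq> \<Union>(U ` topspace T)"
    using openU cover by blast
  then have "\<exists>F. finite F \<and> F \<subseteq> U ` topspace T \<and> topspace T \<subseteq> \<Union>F"
    by (rule mp[OF spec[OF cpt[unfolded compact_space_alt]]])
  then obtain F where F: "finite F" "F \<subseteq> U ` topspace T" "topspace T \<subseteq> \<Union>F" by blast
  then obtain G0 where G0: "G0 \<subseteq> topspace T" "finite G0" "F = U ` G0"
    using finite_subset_image[OF F(1,2)] by blast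
  define \<Psi>0 where "\<Psi>0 = \<Union>(S ` G0)"
  have key: "(if Imp (foldr Conj (xsf g) Top) \<phi> \<in> \<Lambda> then psat z \<phi> else \<not> psat z \<phi>)"
    if zS: "\<forall>\<psi>\<in>S g. psat z \<psi> = g \<psi>" and z: "z \<in> X" for z g
  proof -
    have conj: "psat z (foldr Conj (xsf g) Top)"
      unfolding psat_def sat_foldr
    proof
      fix e assume e: "e \<in> set (xsf g)"
      then have "e \<in> J g \<union> Neg ` (\<Psi> - J g)" using xsf by blast
      then show "sat (fst z) (snd z) e"
      proof
        assume "e \<in> J g"
        then have "e \<in> S g" "g e" using e by (auto simp: J_def S_def)
        then show ?thesis using zS by (simp add: psat_def)
      next
        assume "e \<in> Neg ` (\<Psi> - J g)"
        then obtain \<psi> where \<psi>: "e = Neg \<psi>" "\<psi> \<in> \<Psi>" "\<not> g \<psi>" by (auto simp: J_def)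
        then have "\<psi> \<in> S g" using e by (auto simp: S_def)
        then show ?thesis using zS \<psi> by (simp add: psat_def)
      qed
    qed
    have snd: "\<forall>a\<in>\<Lambda>. psat z a" using so z by (auto simp: sound_wrt_def)
    show ?thesis
    proof (cases "Imp (foldr Conj (xsf g) Top) \<phi> \<in> \<Lambda>")
      case True
      then have "psat z (Imp (foldr Conj (xsf g) Top) \<phi>)" using snd by blast
      then show ?thesis using True conj by (simp add: psat_Imp)
    next
      case False
      then have "Imp (foldr Conj (xsf g) Top) (Neg \<phi>) \<in> \<Lambda>" using xsf by blast
      then have "psat z (Imp (foldr Conj (xsf g) Top) (Neg \<phi>))" using snd by blast
      then show ?thesis using False conj by (simp add: psat_def Imp_def)
    qed
  qed
  show ?thesis
  proof (intro exI[of _ \<Psi>0] conjI ballI impI)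
    show "finite \<Psi>0" using G0 finS by (simp add: \<Psi>0_def)
    show "eqc \<Lambda> ` \<Psi>0 \<subseteq> D" using \<Psi>D SP by (auto simp: \<Psi>0_def)
  next
    fix x y assume x: "x \<in> X" and y: "y \<in> X" and ag: "\<forall>\<psi>\<in>\<Psi>0. psat x \<psi> = psat y \<psi>"
    define hx where "hx = restrict (\<lambda>\<psi>. psat x \<psi>) \<Psi>"
    have "hx \<in> topspace T" by (simp add: topT hx_def)
    then obtain g where g: "g \<in> G0" "hx \<in> U g" using F(3) G0(3) by blast
    have hxS: "\<forall>\<psi>\<in>S g. psat x \<psi> = g \<psi>"
    proof
      fix \<psi> assume \<psi>: "\<psi> \<in> S g"
      then have "\<psi> \<in> \<Psi>" using SP by blast
      then have "hx \<psi> \<in> (if \<psi> \<in> S g then {g \<psi>} else UNIV)" using g(2) by (auto simp: U_def PiE_iff)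
      then show "psat x \<psi> = g \<psi>" using \<psi> \<open>\<psi> \<in> \<Psi>\<close> by (simp add: hx_def)
    qed
    have hyS: "\<forall>\<psi>\<in>S g. psat y \<psi> = g \<psi>" using hxS ag g(1) by (auto simp: \<Psi>0_def)
    show "psat x \<phi> = psat y \<phi>" using key[OF hxS x] key[OF hyS y] by (auto split: if_splits)
  qed
qed



lemma key_formula:
  assumes wfX: "\<forall>x\<in>X. wf_pointed x" and nl: "normal_logic \<Lambda>" and so: "sound_wrt \<Lambda> X"
    and rp: "representative \<Lambda> D"
    and wfa: "wf_action A G" and pf: "precondition_finite \<Lambda> A"
    and det: "deterministic X A G" and exh: "exhaustive X A G"
  shows "\<exists>E. finite E \<and> E \<subseteq> D \<and> (\<forall>x\<in>X. \<forall>y\<in>X. (\<forall>C\<in>E. psat x (rep \<Lambda> C) = psat y (rep \<Lambda> C)) \<longrightarrow>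
            psat (update x A G) a = psat (update y A G) a)"
proof -
  obtain \<Phi> where f\<Phi>: "finite \<Phi>" and H\<Phi>: "\<forall>x\<in>X. \<forall>y\<in>X. (\<forall>\<phi>\<in>\<Phi>. psat x \<phi> = psat y \<phi>) \<longrightarrow>
            psat (update x A G) a = psat (update y A G) a"
    using fin_det[OF wfX nl so wfa pf det exh, of a] by blast
  have ex: "\<forall>\<phi>\<in>\<Phi>. \<exists>\<Psi>0. finite \<Psi>0 \<and> eqc \<Lambda> ` \<Psi>0 \<subseteq> D \<and>
     (\<forall>x\<in>X. \<forall>y\<in>X. (\<forall>\<psi>\<in>\<Psi>0. psat x \<psi> = psat y \<psi>) \<longrightarrow> psat x \<phi> = psat y \<phi>)"
    using compact_det[OF nl so rp] by blast
  obtain P where P: "\<forall>\<phi>\<in>\<Phi>. finite (P \<phi>) \<and> eqc \<Lambda> ` P \<phi> \<subseteq> D \<and>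
     (\<forall>x\<in>X. \<forall>y\<in>X. (\<forall>\<psi>\<in>P \<phi>. psat x \<psi> = psat y \<psi>) \<longrightarrow> psat x \<phi> = psat y \<phi>)"
    using bchoice[OF ex] by blast
  define E where "E = (\<Union>\<phi>\<in>\<Phi>. eqc \<Lambda> ` P \<phi>)"
  show ?thesis
  proof (intro exI[of _ E] conjI ballI impI)
    show "finite E" using f\<Phi> P by (simp add: E_def)
    show "E \<subseteq> D" using P by (auto simp: E_def)
  next
    fix x y assume x: "x \<in> X" and y: "y \<in> X" and ag: "\<forall>C\<in>E. psat x (rep \<Lambda> C) = psat y (rep \<Lambda> C)"
    have "\<forall>\<phi>\<in>\<Phi>. psat x \<phi> = psat y \<phi>"
    proof
      fix \<phi> assume \<phi>: "\<phi> \<in> \<Phi>"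
      have "\<forall>\<psi>\<in>P \<phi>. psat x \<psi> = psat y \<psi>"
      proof
        fix \<psi> assume \<psi>: "\<psi> \<in> P \<phi>"
        then have "eqc \<Lambda> \<psi> \<in> E" using \<phi> by (auto simp: E_def)
        then have "psat x (rep \<Lambda> (eqc \<Lambda> \<psi>)) = psat y (rep \<Lambda> (eqc \<Lambda> \<psi>))" using ag by blast
        then show "psat x \<psi> = psat y \<psi>" using psat_rep[OF nl so x] psat_rep[OF nl so y] by simp
      qed
      then show "psat x \<phi> = psat y \<phi>" using P \<phi> x y by blast
    qed
    then show "psat (update x A G) a = psat (update y A G) a" using H\<Phi> x y by blast
  qed
qed

lemma xcls_self: "x \<in> X \<Longrightarrow> x \<in> xcls \<Lambda> X (LL \<Lambda>) x"
  by (simp add: xcls_def)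

lemma xcls_psat: "z \<in> xcls \<Lambda> X (LL \<Lambda>) x \<Longrightarrow> psat z a = psat x a"
  by (auto simp: xcls_def LL_def)

lemma some_xcls: "x \<in> X \<Longrightarrow> psat (SOME z. z \<in> xcls \<Lambda> X (LL \<Lambda>) x) a = psat x a"
  by (rule xcls_psat, rule someI, rule xcls_self)

lemma dw_eq:
  assumes "x \<in> X" "y \<in> X"
  shows "dw \<Lambda> D w (xcls \<Lambda> X (LL \<Lambda>) x) (xcls \<Lambda> X (LL \<Lambda>) y) =
    (\<Sum>\<^sub>\<infinity>C\<in>D. w C * (if psat x (rep \<Lambda> C) = psat y (rep \<Lambda> C) then 0 else 1))"
  unfolding dw_def Let_def rep_def[symmetric] using some_xcls[OF assms(1)] some_xcls[OF assms(2)]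
  by simp

lemma ws_summable:
  assumes "weight D w"
  shows "(\<lambda>C. w C * (if P C then 0 else 1)) summable_on D"
proof (rule summable_on_comparison_test[of w])
  show "w summable_on D" using assms by (simp add: weight_def)
  fix C assume "C \<in> D"
  then have "w C > 0" using assms by (simp add: weight_def)
  then show "w C * (if P C then 0 else 1) \<le> w C" "0 \<le> w C * (if P C then 0 else 1)" by auto
qed

lemma ws_ge:
  assumes "weight D w" "C0 \<in> D" "\<not> P C0"
  shows "w C0 \<le> (\<Sum>\<^sub>\<infinity>C\<in>D. w C * (if P C then 0 else 1))"
proof -
  let ?t = "\<lambda>C. w C * (if P C then 0 else 1)"
  have "infsum ?t {C0} = w C0" using assms(3) by simp
  moreover have "infsum ?t {C0} \<le> infsum ?t D"
  proof (rule infsum_mono2)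
    show "?t summable_on {C0}" by simp
    show "?t summable_on D" using ws_summable[OF assms(1)] .
    show "{C0} \<subseteq> D" using assms(2) by simp
    fix C assume "C \<in> D - {C0}"
    then have "w C > 0" using assms(1) by (simp add: weight_def)
    then show "?t C \<ge> 0" by simp
  qed
  ultimately show ?thesis using assms(3) by simp
qed

lemma ws_le:
  assumes "weight D w" "F \<subseteq> D" "\<forall>C\<in>F. P C"
  shows "(\<Sum>\<^sub>\<infinity>C\<in>D. w C * (if P C then 0 else 1)) \<le> infsum w (D - F)"
proof -
  let ?t = "\<lambda>C. w C * (if P C then 0 else 1)"
  have "infsum ?t D = infsum ?t (D - F)"
    by (rule infsum_cong_neutral) (use assms(3) in auto)
  also have "\<dots> \<le> infsum w (D - F)"
  proof (rule infsum_mono)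
    show "?t summable_on (D - F)" using summable_on_subset_banach[OF ws_summable[OF assms(1)]] by blast
    show "w summable_on (D - F)" using summable_on_subset_banach[of w D] assms(1) by (simp add: weight_def)
    fix C assume "C \<in> D - F"
    then have "w C > 0" using assms(1) by (simp add: weight_def)
    then show "?t C \<le> w C" by simp
  qed
  finally show ?thesis .
qed

lemma tail:
  assumes "weight D w" "(e::real) > 0"
  shows "\<exists>F. finite F \<and> F \<subseteq> D \<and> infsum w (D - F) < e"
proof -
  have sw: "w summable_on D" using assms(1) by (simp add: weight_def)
  obtain F where F: "finite F" "F \<subseteq> D" "dist (sum w F) (infsum w D) \<le> e / 2"
    using infsum_finite_approximation[OF sw, of "e/2"] assms(2) by auto
  have "D = F \<union> (D - F)" using F(2) by blast
  then have "infsum w D = infsum w F + infsum w (D - F)"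
    using infsum_Un_disjoint[of w F "D - F"] summable_on_subset_banach[OF sw, of "D - F"] F(1) by force
  then have "infsum w (D - F) \<le> e / 2" using F(1,3) by (simp add: dist_real_def)
  then show ?thesis using F(1,2) assms(2) by (intro exI[of _ F]) auto
qed



theorem proposition34:
  fixes X :: "('p::countable, 'i::countable) pmodel set"
    and \<Lambda> :: "('p, 'i) fm set"
    and D :: "('p, 'i) fm set set"
    and w :: "('p, 'i) fm set \<Rightarrow> real"
    and f :: "('p, 'i) pmodel set \<Rightarrow> ('p, 'i) pmodel set"
  assumes "\<forall>x\<in>X. wf_pointed x"
    and "normal_logic \<Lambda>"
    and "sound_wrt \<Lambda> X"
    and "D \<subseteq> LL \<Lambda>"
    and "representative \<Lambda> D"
    and "weight D w"
    and "clean \<Lambda> X f"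
  shows "unif_cont_on (Xcls \<Lambda> X (LL \<Lambda>)) (dw \<Lambda> D w) f"
proof -
  note wfX = assms(1) and nl = assms(2) and so = assms(3) and rp = assms(5) and wt = assms(6)
  let ?xc = "xcls \<Lambda> X (LL \<Lambda>)"
  let ?Q = "Xcls \<Lambda> X (LL \<Lambda>)"
  obtain A G where wfa: "wf_action A G" and pf: "precondition_finite \<Lambda> A" and cl: "closing X A G"
    and det: "deterministic X A G" and exh: "exhaustive X A G"
    and fA: "\<forall>x\<in>X. \<forall>b\<in>?Q. f (?xc x) = b \<longleftrightarrow> update x A G \<in> b"
    using assms(7) unfolding clean_def by blast
  have uX: "update x A G \<in> X" if "x \<in> X" for x using cl that by (simp add: closing_def)
  have fx: "f (?xc x) = ?xc (update x A G)" if x: "x \<in> X" for x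
  proof -
    have "?xc (update x A G) \<in> ?Q" using uX[OF x] by (simp add: Xcls_def)
    moreover have "update x A G \<in> ?xc (update x A G)" using xcls_self[OF uX[OF x]] .
    ultimately show ?thesis using fA x by blast
  qed
  show ?thesis unfolding unif_cont_on_def
  proof (intro allI impI)
    fix e :: real assume e: "e > 0"
    obtain F where F: "finite F" "F \<subseteq> D" "infsum w (D - F) < e" using tail[OF wt e] by blast
    have ex: "\<forall>C\<in>F. \<exists>E. finite E \<and> E \<subseteq> D \<and> (\<forall>x\<in>X. \<forall>y\<in>X. (\<forall>C'\<in>E. psat x (rep \<Lambda> C') = psat y (rep \<Lambda> C')) \<longrightarrow>
            psat (update x A G) (rep \<Lambda> C) = psat (update y A G) (rep \<Lambda> C))"
      using key_formula[OF wfX nl so rp wfa pf det exh] by blast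
    obtain EE where EE: "\<forall>C\<in>F. finite (EE C) \<and> EE C \<subseteq> D \<and> (\<forall>x\<in>X. \<forall>y\<in>X. (\<forall>C'\<in>EE C. psat x (rep \<Lambda> C') = psat y (rep \<Lambda> C')) \<longrightarrow>
            psat (update x A G) (rep \<Lambda> C) = psat (update y A G) (rep \<Lambda> C))"
      using bchoice[OF ex] by blast
    define E where "E = (\<Union>C\<in>F. EE C)"
    have finE: "finite E" using F(1) EE by (simp add: E_def)
    have ED: "E \<subseteq> D" using EE by (auto simp: E_def)
    define \<delta> where "\<delta> = (if E = {} then 1 else Min (w ` E))"
    have wpos: "C \<in> D \<Longrightarrow> w C > 0" for C using wt by (simp add: weight_def)
    have \<delta>pos: "\<delta> > 0"
    proof (cases "E = {}")
      case False
      then have "Min (w ` E) \<in> w ` E" using finE by simp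
      then show ?thesis using False ED wpos by (auto simp: \<delta>_def)
    qed (simp add: \<delta>_def)
    have \<delta>le: "C \<in> E \<Longrightarrow> \<delta> \<le> w C" for C using finE by (auto simp: \<delta>_def)
    show "\<exists>\<delta>>0. \<forall>a\<in>?Q. \<forall>b\<in>?Q. dw \<Lambda> D w a b < \<delta> \<longrightarrow> dw \<Lambda> D w (f a) (f b) < e"
    proof (intro exI[of _ \<delta>] conjI ballI impI)
      show "\<delta> > 0" by (rule \<delta>pos)
    next
      fix a b assume a: "a \<in> ?Q" and b: "b \<in> ?Q" and d: "dw \<Lambda> D w a b < \<delta>"
      obtain x where x: "x \<in> X" "a = ?xc x" using a by (auto simp: Xcls_def)
      obtain y where y: "y \<in> X" "b = ?xc y" using b by (auto simp: Xcls_def)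
      have agE: "\<forall>C\<in>E. psat x (rep \<Lambda> C) = psat y (rep \<Lambda> C)"
      proof (rule ccontr)
        assume "\<not> (\<forall>C\<in>E. psat x (rep \<Lambda> C) = psat y (rep \<Lambda> C))"
        then obtain C where C: "C \<in> E" "psat x (rep \<Lambda> C) \<noteq> psat y (rep \<Lambda> C)" by blast
        have "w C \<le> dw \<Lambda> D w a b"
          unfolding x(2) y(2) dw_eq[OF x(1) y(1)]
          by (rule ws_ge[OF wt]) (use C ED in auto)
        then show False using \<delta>le[OF C(1)] d by simp
      qed
      have agF: "\<forall>C\<in>F. psat (update x A G) (rep \<Lambda> C) = psat (update y A G) (rep \<Lambda> C)"
      proof
        fix C assume C: "C \<in> F"
        have "\<forall>C'\<in>EE C. psat x (rep \<Lambda> C') = psat y (rep \<Lambda> C')" using agE C by (auto simp: E_def)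
        then show "psat (update x A G) (rep \<Lambda> C) = psat (update y A G) (rep \<Lambda> C)"
          using EE C x(1) y(1) by blast
      qed
      have "dw \<Lambda> D w (f a) (f b) = dw \<Lambda> D w (?xc (update x A G)) (?xc (update y A G))"
        using fx x y by simp
      also have "\<dots> \<le> infsum w (D - F)"
        unfolding dw_eq[OF uX[OF x(1)] uX[OF y(1)]]
        by (rule ws_le[OF wt F(2)]) (use agF in simp)
      also have "\<dots> < e" by (rule F(3))
      finally show "dw \<Lambda> D w (f a) (f b) < e" .
    qed
  qed
qed

end
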